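(* Let $n\geq 2$ and let $L_n$ be the graph of linear $[n]$-phenylene (defined in the context). Then the base polynomial counting distances between pairs of degree-2 vertices of $L_n$ is \begin{eqnarray*} H^{2,2}_{b}(L_{n}) &=& 6x+(3n-2)x^{3}+2\sum_{k=2}^{n}(n-k+3)x^{3k-2}+4\sum_{k=1}^{n-1}x^{3k-1}\\ &&+6x^{3n-1}+2\sum_{k=2}^{n}(n-k)x^{3k}+2x^{3n}. \end{eqnarray*}
   Context: All graphs are finite, simple and connected; $d(u,v)$ denotes the shortest-path distance and $d_u$ the degree of a vertex $u$. For a graph $G$ and degrees $p\le q$, the base polynomial is $H^{p,q}_{b}(G)=\sum x^{d(u,v)}$, where the sum runs over all unordered pairs $\{u,v\}$ of distinct vertices of $G$ such that one of $u,v$ has degree $p$ and the other has degree $q$ (for $p=q$: both have degree $p$). Linear $[n]$-phenylene $L_n$: take $n$ hexagons $H_1,\dots,H_n$; hexagon $H_i$ is the 6-cycle $a_i b_i c_i d_i e_i f_i a_i$. For each $i=1,\dots,n-1$ add the two edges $b_i f_{i+1}$ and $c_i e_{i+1}$, so that $b_i c_i e_{i+1} f_{i+1}$ is a 4-cycle joining consecutive hexagons. Thus $L_n$ has $6n$ vertices, $n$ hexagons and $n-1$ squares, $2n+4$ vertices of degree 2 and $4n-4$ vertices of degree 3. *)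

theory Defs
  imports "HOL-Computational_Algebra.Polynomial"
begin

definition walk :: "'a set \<Rightarrow> ('a \<Rightarrow> 'a \<Rightarrow> bool) \<Rightarrow> 'a list \<Rightarrow> bool" where
  "walk V E xs \<longleftrightarrow> xs \<noteq> [] \<and> set xs \<subseteq> V \<and>
     (\<forall>i. Suc i < length xs \<longrightarrow> E (xs ! i) (xs ! Suc i))"

definition gdist :: "'a set \<Rightarrow> ('a \<Rightarrow> 'a \<Rightarrow> bool) \<Rightarrow> 'a \<Rightarrow> 'a \<Rightarrow> nat" where
  "gdist V E u v = (LEAST k. \<exists>xs. walk V E xs \<and> hd xs = u \<and> last xs = v \<and> length xs = Suc k)"

definition gdeg :: "'a set \<Rightarrow> ('a \<Rightarrow> 'a \<Rightarrow> bool) \<Rightarrow> 'a \<Rightarrow> nat" where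
  "gdeg V E u = card {v \<in> V. E u v}"

definition deg_pairs :: "'a set \<Rightarrow> ('a \<Rightarrow> 'a \<Rightarrow> bool) \<Rightarrow> nat \<Rightarrow> nat \<Rightarrow> 'a set set" where
  "deg_pairs V E p q = {{u, v} | u v. u \<in> V \<and> v \<in> V \<and> u \<noteq> v \<and>
      ((gdeg V E u = p \<and> gdeg V E v = q) \<or> (gdeg V E u = q \<and> gdeg V E v = p))}"

text \<open>Distance between the two elements of an unordered pair (d is symmetric, Min just
  avoids choosing an orientation).\<close>
definition pair_dist :: "'a set \<Rightarrow> ('a \<Rightarrow> 'a \<Rightarrow> bool) \<Rightarrow> 'a set \<Rightarrow> nat" where
  "pair_dist V E e = Min {gdist V E u v | u v. u \<in> e \<and> v \<in> e \<and> u \<noteq> v}"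

definition base_poly :: "'a set \<Rightarrow> ('a \<Rightarrow> 'a \<Rightarrow> bool) \<Rightarrow> nat \<Rightarrow> nat \<Rightarrow> int poly" where
  "base_poly V E p q = (\<Sum>e\<in>deg_pairs V E p q. monom 1 (pair_dist V E e))"

text \<open>Vertex (i,j), 1 \<le> i \<le> n, j < 6: j = 0,1,2,3,4,5 stands for a_i,b_i,c_i,d_i,e_i,f_i.\<close>
definition phen_V :: "nat \<Rightarrow> (nat \<times> nat) set" where
  "phen_V n = {(i, j). 1 \<le> i \<and> i \<le> n \<and> j < 6}"

definition phen_E0 :: "nat \<Rightarrow> nat \<times> nat \<Rightarrow> nat \<times> nat \<Rightarrow> bool" where
  "phen_E0 n x y \<longleftrightarrow> x \<in> phen_V n \<and> y \<in> phen_V n \<and>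
     ((fst x = fst y \<and> snd y = (snd x + 1) mod 6)
      \<or> (fst y = fst x + 1 \<and> snd x = 1 \<and> snd y = 5)
      \<or> (fst y = fst x + 1 \<and> snd x = 2 \<and> snd y = 4))"

definition phen_E :: "nat \<Rightarrow> nat \<times> nat \<Rightarrow> nat \<times> nat \<Rightarrow> bool" where
  "phen_E n x y \<longleftrightarrow> phen_E0 n x y \<or> phen_E0 n y x"

end

theory Submission
  imports Defs
begin


definition cyc :: "nat \<Rightarrow> nat \<Rightarrow> nat" where
  "cyc a b = (let d = (if a \<le> b then b - a else a - b) in min d (6 - d))"

definition ctab :: "nat \<Rightarrow> nat \<Rightarrow> nat" where
  "ctab j k = [[2,3,4,3,2,1],[1,2,3,2,1,0],[2,3,2,1,0,1],[3,4,3,2,1,2],[4,5,4,3,2,3],[3,4,5,4,3,2::nat]] ! j ! k"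

fun D :: "nat \<times> nat \<Rightarrow> nat \<times> nat \<Rightarrow> nat" where
  "D (i,j) (i',j') = (if i = i' then cyc j j' else if i < i' then 3*(i'-i) - 2 + ctab j j'
      else 3*(i-i') - 2 + ctab j' j)"

lemma six_cases: "(j::nat) < 6 \<Longrightarrow> j = 0 \<or> j = 1 \<or> j = 2 \<or> j = 3 \<or> j = 4 \<or> j = 5"
  by auto

lemma phen_E_iff: "phen_E n (i,j) (i',j') \<longleftrightarrow> (i,j) \<in> phen_V n \<and> (i',j') \<in> phen_V n \<and>
   ((i = i' \<and> (j' = (j+1) mod 6 \<or> j = (j'+1) mod 6)) \<or>
    (i' = i+1 \<and> ((j=1 \<and> j'=5) \<or> (j=2 \<and> j'=4))) \<or>
    (i = i'+1 \<and> ((j'=1 \<and> j=5) \<or> (j'=2 \<and> j=4))))"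
  unfolding phen_E_def phen_E0_def by auto

lemma V_iff: "(i,j) \<in> phen_V n \<longleftrightarrow> 1 \<le> i \<and> i \<le> n \<and> j < 6"
  by (simp add: phen_V_def)

lemma fin1:
  assumes "b < 6" "j < 6"
  shows "cyc b ((j+1) mod 6) \<le> cyc b j + 1 \<and> cyc b j \<le> cyc b ((j+1) mod 6) + 1 \<and>
    ctab b ((j+1) mod 6) \<le> ctab b j + 1 \<and> ctab b j \<le> ctab b ((j+1) mod 6) + 1 \<and>
    ctab ((j+1) mod 6) b \<le> ctab j b + 1 \<and> ctab j b \<le> ctab ((j+1) mod 6) b + 1"
  using six_cases[OF assms(1)] six_cases[OF assms(2)]
  by (auto simp: cyc_def ctab_def)

lemma fin2:
  assumes "b < 6" "(j = 1 \<and> j' = 5) \<or> (j = 2 \<and> j' = 4)"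
  shows "ctab b j' + 2 \<le> ctab b j \<and> ctab b j \<le> ctab b j' + 4 \<and> ctab b j' \<le> cyc b j \<and>
    cyc b j \<le> ctab b j' + 2 \<and> cyc b j' \<le> ctab j b + 2 \<and> ctab j b \<le> cyc b j' \<and>
    ctab j' b \<le> ctab j b + 4 \<and> ctab j b + 2 \<le> ctab j' b"
  using six_cases[OF assms(1)] assms(2)
  by (auto simp: cyc_def ctab_def)

lemma lower_step:
  assumes "(a,b) \<in> phen_V n" "phen_E n (i,j) (i',j')"
  shows "D (a,b) (i',j') \<le> D (a,b) (i,j) + 1"
proof -
  have b: "b < 6" using assms(1) by (simp add: V_iff)
  have j: "j < 6" "j' < 6" using assms(2) by (auto simp: phen_E_iff V_iff)
  have e: "(i = i' \<and> (j' = (j+1) mod 6 \<or> j = (j'+1) mod 6)) \<or>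
    (i' = i+1 \<and> ((j=1 \<and> j'=5) \<or> (j=2 \<and> j'=4))) \<or>
    (i = i'+1 \<and> ((j'=1 \<and> j=5) \<or> (j'=2 \<and> j=4)))" using assms(2) by (simp add: phen_E_iff)
  then consider (h1) "i = i'" "j' = (j+1) mod 6" | (h2) "i = i'" "j = (j'+1) mod 6"
    | (c1) "i' = i+1" "(j=1 \<and> j'=5) \<or> (j=2 \<and> j'=4)"
    | (c2) "i = i'+1" "(j'=1 \<and> j=5) \<or> (j'=2 \<and> j=4)" by blast
  then show ?thesis
  proof cases
    case h1
    then show ?thesis using fin1[OF b j(1)] by (auto split: nat_diff_split)
  next
    case h2
    then show ?thesis using fin1[OF b j(2)] by (auto split: nat_diff_split)
  next
    case c1
    then show ?thesis using fin2[OF b c1(2)] by (auto split: nat_diff_split)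
  next
    case c2
    then show ?thesis using fin2[OF b c2(2)] by (auto split: nat_diff_split)
  qed
qed

lemma fin3:
  assumes "b < 6" "j < 6" "b \<noteq> j"
  shows "cyc b ((j+1) mod 6) + 1 = cyc b j \<or> cyc b ((j+5) mod 6) + 1 = cyc b j"
  using six_cases[OF assms(1)] six_cases[OF assms(2)] assms(3)
  by (auto simp: cyc_def)

lemma fin4:
  assumes "b < 6" "j < 6"
  shows "ctab b ((j+1) mod 6) + 1 = ctab b j \<or> ctab b ((j+5) mod 6) + 1 = ctab b j \<or>
     ((j = 4 \<or> j = 5) \<and> cyc b (6-j) = ctab b j \<and> ctab b (6-j) = ctab b j + 2)"
  using six_cases[OF assms(1)] six_cases[OF assms(2)]
  by (auto simp: cyc_def ctab_def)

lemma fin5: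
  assumes "b < 6" "j < 6"
  shows "ctab ((j+1) mod 6) b + 1 = ctab j b \<or> ctab ((j+5) mod 6) b + 1 = ctab j b \<or>
     ((j = 1 \<or> j = 2) \<and> cyc b (6-j) = ctab j b \<and> ctab (6-j) b = ctab j b + 2)"
  using six_cases[OF assms(1)] six_cases[OF assms(2)]
  by (auto simp: cyc_def ctab_def)

lemma cyc_sym: "cyc a b = cyc b a"
  by (simp add: cyc_def Let_def)

lemma D_sym: "D u v = D v u"
  by (cases u; cases v) (auto simp: cyc_sym)

lemma cyc_zero: "a < 6 \<Longrightarrow> b < 6 \<Longrightarrow> cyc a b = 0 \<Longrightarrow> a = b"
  by (auto simp: cyc_def Let_def split: if_splits)

lemma D_zero: "u \<in> phen_V n \<Longrightarrow> v \<in> phen_V n \<Longrightarrow> D u v = 0 \<Longrightarrow> u = v"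
  by (cases u; cases v) (auto simp: V_iff dest: cyc_zero split: if_splits)

lemma upper_step:
  assumes "(a,b) \<in> phen_V n" "(i,j) \<in> phen_V n" "(i,j) \<noteq> (a,b)"
  shows "\<exists>w. phen_E n w (i,j) \<and> D (a,b) w + 1 = D (a,b) (i,j)"
proof -
  have b: "b < 6" and j: "j < 6" and ai: "1 \<le> a" "a \<le> n" "1 \<le> i" "i \<le> n"
    using assms by (auto simp: V_iff)
  have e1: "phen_E n (i, (j+1) mod 6) (i,j)" using assms(2) j by (simp add: phen_E_iff V_iff)
  have e2: "phen_E n (i, (j+5) mod 6) (i,j)" using assms(2) j using six_cases[OF j] by (auto simp add: phen_E_iff V_iff)
  consider "a = i" | "a < i" | "i < a" by linarith
  then show ?thesis
  proof cases
    case 1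
    then have "b \<noteq> j" using assms(3) by auto
    from fin3[OF b j this] show ?thesis
      using e1 e2 1 by auto
  next
    case 2
    from fin4[OF b j] show ?thesis
    proof (elim disjE)
      assume h: "ctab b ((j+1) mod 6) + 1 = ctab b j"
      show ?thesis using e1 2 h by (intro exI[of _ "(i, (j+1) mod 6)"]) auto
    next
      assume h: "ctab b ((j+5) mod 6) + 1 = ctab b j"
      show ?thesis using e2 2 h by (intro exI[of _ "(i, (j+5) mod 6)"]) auto
    next
      assume h: "(j = 4 \<or> j = 5) \<and> cyc b (6-j) = ctab b j \<and> ctab b (6-j) = ctab b j + 2"
      have e3: "phen_E n (i-1, 6-j) (i,j)" using h 2 ai by (auto simp: phen_E_iff V_iff)
      show ?thesis using e3 2 h by (intro exI[of _ "(i-1, 6-j)"]) auto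
    qed
  next
    case 3
    from fin5[OF b j] show ?thesis
    proof (elim disjE)
      assume h: "ctab ((j+1) mod 6) b + 1 = ctab j b"
      show ?thesis using e1 3 h by (intro exI[of _ "(i, (j+1) mod 6)"]) auto
    next
      assume h: "ctab ((j+5) mod 6) b + 1 = ctab j b"
      show ?thesis using e2 3 h by (intro exI[of _ "(i, (j+5) mod 6)"]) auto
    next
      assume h: "(j = 1 \<or> j = 2) \<and> cyc b (6-j) = ctab j b \<and> ctab (6-j) b = ctab j b + 2"
      have e3: "phen_E n (i+1, 6-j) (i,j)" using h 3 ai by (auto simp: phen_E_iff V_iff)
      show ?thesis using e3 3 h by (intro exI[of _ "(i+1, 6-j)"]) (auto simp: cyc_sym)
    qed
  qed
qed

lemma walk_snoc: "walk V E (xs @ [y]) \<longleftrightarrow> (xs = [] \<and> y \<in> V) \<or> (walk V E xs \<and> y \<in> V \<and> E (last xs) y)"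
proof (cases xs rule: rev_cases)
  case Nil
  then show ?thesis by (auto simp: walk_def)
next
  case (snoc ys x)
  show ?thesis
  proof
    assume w: "walk V E (xs @ [y])"
    have "walk V E xs"
      unfolding walk_def
    proof (intro conjI allI impI)
      show "xs \<noteq> []" using snoc by simp
      show "set xs \<subseteq> V" using w by (auto simp: walk_def)
      fix i assume "Suc i < length xs"
      then show "E (xs ! i) (xs ! Suc i)" using w unfolding walk_def
        by (metis Suc_lessD length_append_singleton less_SucI nth_append)
    qed
    moreover have "E (last xs) y"
    proof -
      have "Suc (length ys) < length (xs @ [y])" using snoc by simp
      then have "E ((xs@[y]) ! length ys) ((xs@[y]) ! Suc (length ys))" using w by (simp add: walk_def)
      then show ?thesis using snoc by (simp add: nth_append)
    qed
    ultimately show "(xs = [] \<and> y \<in> V) \<or> (walk V E xs \<and> y \<in> V \<and> E (last xs) y)"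
      using w by (auto simp: walk_def)
  next
    assume "(xs = [] \<and> y \<in> V) \<or> (walk V E xs \<and> y \<in> V \<and> E (last xs) y)"
    then have w: "walk V E xs" "y \<in> V" "E (last xs) y" using snoc by auto
    show "walk V E (xs @ [y])"
      unfolding walk_def
    proof (intro conjI allI impI)
      show "xs @ [y] \<noteq> []" by simp
      show "set (xs @ [y]) \<subseteq> V" using w by (auto simp: walk_def)
      fix i assume i: "Suc i < length (xs @ [y])"
      show "E ((xs @ [y]) ! i) ((xs @ [y]) ! Suc i)"
      proof (cases "Suc i < length xs")
        case True
        then show ?thesis using w(1) by (simp add: walk_def nth_append)
      next
        case False
        then have "Suc i = length xs" using i by simp
        then show ?thesis using w(3) snoc by (simp add: nth_append last_conv_nth)
      qed
    qed
  qed
qed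

lemma walk_lower:
  "walk (phen_V n) (phen_E n) xs \<Longrightarrow> D (hd xs) (last xs) + 1 \<le> length xs"
proof (induction xs rule: rev_induct)
  case Nil
  then show ?case by (simp add: walk_def)
next
  case (snoc y xs)
  show ?case
  proof (cases "xs = []")
    case True
    then show ?thesis by (cases y) (simp add: cyc_def)
  next
    case False
    then have w: "walk (phen_V n) (phen_E n) xs" "phen_E n (last xs) y"
      using snoc.prems by (auto simp: walk_snoc)
    have h: "hd xs \<in> phen_V n" using w(1) by (auto simp: walk_def)
    obtain a b where ab: "hd xs = (a,b)" by fastforce
    obtain i j where ij: "last xs = (i,j)" by fastforce
    obtain i' j' where ij': "y = (i',j')" by fastforce
    have "D (hd xs) y \<le> D (hd xs) (last xs) + 1"
      using lower_step[of a b n i j i' j'] h w(2) ab ij ij' by simp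
    then show ?thesis using snoc.IH[OF w(1)] False by simp
  qed
qed

lemma walk_exists:
  assumes "u \<in> phen_V n"
  shows "v \<in> phen_V n \<Longrightarrow> D u v = k \<Longrightarrow>
    \<exists>xs. walk (phen_V n) (phen_E n) xs \<and> hd xs = u \<and> last xs = v \<and> length xs = Suc k"
proof (induction k arbitrary: v)
  case 0
  then have "v = u" using D_zero[OF assms] by (metis D_sym)
  then show ?case using assms by (intro exI[of _ "[u]"]) (auto simp: walk_def)
next
  case (Suc k)
  have "v \<noteq> u" using Suc.prems by (cases u) (auto simp: cyc_def)
  obtain a b where ab: "u = (a,b)" by fastforce
  obtain i j where ij: "v = (i,j)" by fastforce
  obtain w where w: "phen_E n w v" "D u w + 1 = D u v"
    using upper_step[of a b n i j] assms Suc.prems `v \<noteq> u` ab ij by auto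
  have wV: "w \<in> phen_V n" using w(1) unfolding phen_E_def phen_E0_def by auto
  obtain xs where xs: "walk (phen_V n) (phen_E n) xs" "hd xs = u" "last xs = w" "length xs = Suc k"
    using Suc.IH[OF wV] w Suc.prems by auto
  have ne: "xs \<noteq> []" using xs(4) by auto
  have "walk (phen_V n) (phen_E n) (xs @ [v])" using xs w Suc.prems by (simp add: walk_snoc)
  moreover have "hd (xs @ [v]) = u" using ne xs(2) by simp
  ultimately show ?case using xs(4) by (intro exI[of _ "xs @ [v]"]) auto
qed

lemma gdist_eq:
  assumes "u \<in> phen_V n" "v \<in> phen_V n"
  shows "gdist (phen_V n) (phen_E n) u v = D u v"
  unfolding gdist_def
proof (rule Least_equality)
  show "\<exists>xs. walk (phen_V n) (phen_E n) xs \<and> hd xs = u \<and> last xs = v \<and> length xs = Suc (D u v)"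
    using walk_exists[OF assms] by blast
next
  fix k assume "\<exists>xs. walk (phen_V n) (phen_E n) xs \<and> hd xs = u \<and> last xs = v \<and> length xs = Suc k"
  then show "D u v \<le> k" using walk_lower by fastforce
qed


lemma mod_aux1: "(j::nat) < 6 \<Longrightarrow> j' < 6 \<Longrightarrow> j = (j'+1) mod 6 \<Longrightarrow> j' = (j+5) mod 6"
  by (drule six_cases[of j'], auto)

lemma mod_aux2: "j < (6::nat) \<Longrightarrow> j = ((j+5) mod 6 + 1) mod 6"
  by (drule six_cases, auto)

lemma N_eq:
  assumes "(i,j) \<in> phen_V n"
  shows "{v \<in> phen_V n. phen_E n (i,j) v} = {(i,(j+1) mod 6),(i,(j+5) mod 6)} \<union>
     (if (j=4 \<or> j=5) \<and> 2 \<le> i then {(i-1,6-j)} else {}) \<union>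
     (if (j=1 \<or> j=2) \<and> i < n then {(i+1,6-j)} else {})" (is "?L = ?R")
proof -
  have j: "j < 6" "1 \<le> i" "i \<le> n" using assms by (auto simp: V_iff)
  show ?thesis
  proof (intro set_eqI iffI)
    fix v assume v: "v \<in> ?L"
    obtain i' j' where v': "v = (i',j')" by fastforce
    have j': "j' < 6" using v v' by (simp add: V_iff)
    from v v' have "(i = i' \<and> (j' = (j+1) mod 6 \<or> j = (j'+1) mod 6)) \<or>
    (i' = i+1 \<and> ((j=1 \<and> j'=5) \<or> (j=2 \<and> j'=4))) \<or>
    (i = i'+1 \<and> ((j'=1 \<and> j=5) \<or> (j'=2 \<and> j=4)))" "i' \<le> n" "1 \<le> i'"
      by (simp_all add: phen_E_iff V_iff)
    then show "v \<in> ?R" using mod_aux1[OF j(1) j'] v' by (elim disjE) auto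
  next
    fix v assume "v \<in> ?R"
    then consider "v = (i,(j+1) mod 6)" | "v = (i,(j+5) mod 6)" | "(j=4 \<or> j=5) \<and> 2 \<le> i \<and> v = (i-1,6-j)"
      | "(j=1 \<or> j=2) \<and> i < n \<and> v = (i+1,6-j)" by (auto split: if_splits)
    then show "v \<in> ?L"
    proof cases
      case 1 then show ?thesis using j by (simp add: phen_E_iff V_iff)
    next
      case 2 then show ?thesis using j mod_aux2[OF j(1)] by (simp add: phen_E_iff V_iff)
    next
      case 3 then show ?thesis using j by (auto simp add: phen_E_iff V_iff)
    next
      case 4 then show ?thesis using j by (auto simp add: phen_E_iff V_iff)
    qed
  qed
qed

definition deg2 :: "nat \<Rightarrow> nat \<Rightarrow> nat \<Rightarrow> bool" where
  "deg2 n i j \<longleftrightarrow> j = 0 \<or> j = 3 \<or> ((j = 4 \<or> j = 5) \<and> i = 1) \<or> ((j = 1 \<or> j = 2) \<and> i = n)"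

lemma gdeg_2_iff:
  assumes "(i,j) \<in> phen_V n"
  shows "gdeg (phen_V n) (phen_E n) (i,j) = 2 \<longleftrightarrow> deg2 n i j"
proof -
  have j: "j < 6" "1 \<le> i" "i \<le> n" using assms by (auto simp: V_iff)
  have "j = 0 \<or> j = 1 \<or> j = 2 \<or> j = 3 \<or> j = 4 \<or> j = 5" using six_cases[OF j(1)] .
  then show ?thesis
    unfolding gdeg_def N_eq[OF assms] deg2_def
    using j by (elim disjE) auto
qed


declare D.simps[simp del]

definition S :: "nat \<Rightarrow> (nat \<times> nat) set" where
  "S n = {(i,j). (i,j) \<in> phen_V n \<and> deg2 n i j}"

lemma finite_V: "finite (phen_V n)"
proof -
  have "phen_V n \<subseteq> {1..n} \<times> {..<6}" by (auto simp: phen_V_def)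
  then show ?thesis by (rule finite_subset) auto
qed

lemma S_sub: "S n \<subseteq> phen_V n" by (auto simp: S_def)

lemma finite_S: "finite (S n)" using finite_subset[OF S_sub finite_V] .

lemma pd_eq:
  assumes "u \<in> phen_V n" "v \<in> phen_V n" "u \<noteq> v"
  shows "pair_dist (phen_V n) (phen_E n) {u,v} = D u v"
proof -
  have "{gdist (phen_V n) (phen_E n) u' v' | u' v'. u' \<in> {u,v} \<and> v' \<in> {u,v} \<and> u' \<noteq> v'} = {D u v}"
  proof -
    have "{gdist (phen_V n) (phen_E n) u' v' | u' v'. u' \<in> {u,v} \<and> v' \<in> {u,v} \<and> u' \<noteq> v'}
       = {gdist (phen_V n) (phen_E n) u v, gdist (phen_V n) (phen_E n) v u}"
      using assms(3) by blast
    then show ?thesis using gdist_eq[OF assms(1,2)] gdist_eq[OF assms(2,1)] D_sym[of u v] by simp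
  qed
  then show ?thesis unfolding pair_dist_def by simp
qed

lemma dp_eq:
  "deg_pairs (phen_V n) (phen_E n) 2 2 = {{u,v} | u v. u \<in> S n \<and> v \<in> S n \<and> u \<noteq> v}"
  unfolding deg_pairs_def S_def
  using gdeg_2_iff by fastforce

lemma twoH:
  "2 * base_poly (phen_V n) (phen_E n) 2 2 =
     (\<Sum>p\<in>{(u,v). u \<in> S n \<and> v \<in> S n \<and> u \<noteq> v}. monom 1 (D (fst p) (snd p)))"
proof -
  let ?O = "{(u,v). u \<in> S n \<and> v \<in> S n \<and> u \<noteq> v}"
  let ?h = "\<lambda>p. {fst p, snd p}"
  let ?pd = "pair_dist (phen_V n) (phen_E n)"
  have fin: "finite ?O"
    by (rule finite_subset[of _ "S n \<times> S n"]) (auto simp: finite_S)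
  have img: "?h ` ?O = deg_pairs (phen_V n) (phen_E n) 2 2"
    unfolding dp_eq by force
  have "(\<Sum>p\<in>?O. monom 1 (D (fst p) (snd p))) = (\<Sum>p\<in>?O. monom 1 (?pd (?h p)))"
  proof (rule sum.cong[OF refl])
    fix p assume "p \<in> ?O"
    then obtain u v where "p = (u,v)" "u \<in> S n" "v \<in> S n" "u \<noteq> v" by auto
    then show "monom 1 (D (fst p) (snd p)) = monom 1 (?pd (?h p))"
    proof -
      have "u \<in> phen_V n" "v \<in> phen_V n" using \<open>u \<in> S n\<close> \<open>v \<in> S n\<close> S_sub by auto
      then show ?thesis using pd_eq[of u n v] \<open>p = (u,v)\<close> \<open>u \<noteq> v\<close> by simp
    qed
  qed
  also have "\<dots> = (\<Sum>e\<in>?h ` ?O. \<Sum>p\<in>{p. p \<in> ?O \<and> ?h p = e}. monom 1 (?pd (?h p)))"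
    by (rule sum.image_gen[OF fin])
  also have "\<dots> = (\<Sum>e\<in>?h ` ?O. 2 * monom 1 (?pd e))"
  proof (rule sum.cong[OF refl])
    fix e assume "e \<in> ?h ` ?O"
    then obtain p where p: "p \<in> ?O" "e = ?h p" by blast
    obtain u v where "p = (u,v)" by (metis surj_pair)
    then have uv: "u \<in> S n" "v \<in> S n" "u \<noteq> v" "e = {u,v}" using p by auto
    have "{p. p \<in> ?O \<and> ?h p = e} = {(u,v),(v,u)}"
      using uv by (auto simp: doubleton_eq_iff)
    then show "(\<Sum>p\<in>{p. p \<in> ?O \<and> ?h p = e}. monom 1 (?pd (?h p))) = 2 * monom 1 (?pd e)"
      using uv by (simp add: insert_commute mult_2)
  qed
  finally have "(\<Sum>p\<in>?O. monom 1 (D (fst p) (snd p))) = 2 * (\<Sum>e\<in>?h ` ?O. monom 1 (?pd e))"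
    by (simp add: sum_distrib_left)
  then show ?thesis
    unfolding base_poly_def img[symmetric] by (rule sym)
qed

definition GA :: "'a::comm_ring_1 \<Rightarrow> nat \<Rightarrow> 'a" where "GA y N = (\<Sum>d<N. y^d)"
definition GB :: "'a::comm_ring_1 \<Rightarrow> nat \<Rightarrow> 'a" where "GB y N = (\<Sum>d<N. of_nat d * y^d)"

definition dd :: "nat \<Rightarrow> nat \<Rightarrow> nat" where "dd i i' = (if i < i' then i' - i else i - i')"

lemma GA_Suc: "GA y (Suc N) = GA y N + y^N" by (simp add: GA_def)
lemma GB_Suc: "GB y (Suc N) = GB y N + of_nat N * y^N" by (simp add: GB_def)
lemma GA_Suc': "GA y (Suc N) = 1 + y * GA y N"
  by (simp add: GA_def sum.lessThan_Suc_shift sum_distrib_left del: sum.lessThan_Suc)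

lemma rowsum: "(\<Sum>i\<in>{1..M}. (y::'a::comm_ring_1)^(Suc M - i)) = y * GA y M"
proof (induction M)
  case 0
  then show ?case by (simp add: GA_def)
next
  case (Suc M)
  have "(\<Sum>i\<in>{1..Suc M}. y^(Suc (Suc M) - i)) = (\<Sum>i\<in>{1..M}. y^(Suc (Suc M) - i)) + y"
    by (simp add: sum.cl_ivl_Suc)
  also have "(\<Sum>i\<in>{1..M}. y^(Suc (Suc M) - i)) = (\<Sum>i\<in>{1..M}. y * y^(Suc M - i))"
    by (rule sum.cong) (auto simp: Suc_diff_le)
  also have "\<dots> = y * (y * GA y M)" using Suc.IH by (simp add: sum_distrib_left[symmetric])
  finally show ?case by (simp add: GA_Suc' algebra_simps)
qed

lemma Wsum: "(\<Sum>i\<in>{1..Suc N}. \<Sum>i'\<in>{1..Suc N}. if i = i' then 0 else (y::'a::comm_ring_1)^(dd i i'))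
   = 2 * y * (of_nat N * GA y N - GB y N)"
proof (induction N)
  case 0
  then show ?case by (simp add: GA_def GB_def)
next
  case (Suc N)
  let ?I = "{1..Suc N}"
  let ?m = "Suc (Suc N)"
  let ?w = "\<lambda>i i'. if i = i' then 0 else y^(dd i i')"
  have I': "{1..?m} = insert ?m ?I" by auto
  have nm: "?m \<notin> ?I" by simp
  have "(\<Sum>i\<in>{1..?m}. \<Sum>i'\<in>{1..?m}. ?w i i') =
     ?w ?m ?m + (\<Sum>i'\<in>?I. ?w ?m i') + (\<Sum>i\<in>?I. ?w i ?m + (\<Sum>i'\<in>?I. ?w i i'))"
    unfolding I' using nm by (simp add: sum.insert)
  also have "\<dots> = (\<Sum>i'\<in>?I. y^(?m - i')) + (\<Sum>i\<in>?I. y^(?m - i)) + (\<Sum>i\<in>?I. \<Sum>i'\<in>?I. ?w i i')"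
  proof -
    have "(\<Sum>i'\<in>?I. ?w ?m i') = (\<Sum>i'\<in>?I. y^(?m - i'))"
      by (rule sum.cong) (auto simp: dd_def)
    moreover have "(\<Sum>i\<in>?I. ?w i ?m + (\<Sum>i'\<in>?I. ?w i i')) = (\<Sum>i\<in>?I. y^(?m - i)) + (\<Sum>i\<in>?I. \<Sum>i'\<in>?I. ?w i i')"
      by (simp add: sum.distrib dd_def)
    ultimately show ?thesis by simp
  qed
  also have "\<dots> = 2 * y * GA y (Suc N) + 2 * y * (of_nat N * GA y N - GB y N)"
    using Suc.IH rowsum[of y "Suc N"] by simp
  also have "\<dots> = 2 * y * (of_nat (Suc N) * GA y (Suc N) - GB y (Suc N))"
    by (simp add: GA_Suc GB_Suc algebra_simps)
  finally show ?case .
qed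

lemma fin_alg:
  fixes x A B P n :: "'a::idom"
  assumes hA: "(1 - x^3) * A = 1 - P"
    and hB: "(1 - x^3)^2 * B = x^3 - n * P + (n - 1) * x^3 * P"
  shows "(1 - x^3) * (6*x + 4*x^2 + (n+1)*x^3 + (2*x^3+2*x^4)*(n*A - B) + 4*(x^4+x^5)*A + 2*(x^2+x^3)*P)
       = (1 - x^3) * (6*x + (3*n+1)*x^3 + 2*x^4*((n+2)*A - B) + 4*x^2*A + 6*x^2*P + 2*x^6*((n-1)*A - B) + 2*x^3*P)"
  using hA hB by algebra

definition X :: "int poly" where "X = [:0,1:]"

lemma monom1: "monom 1 k = X^k" by (simp add: monom_altdef X_def)

lemma R2: "(\<Sum>i\<in>{2..Suc N}. f i) = (\<Sum>e<N. f (e+2))"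
  by (induction N) (auto simp: sum.cl_ivl_Suc)

lemma R1: "(\<Sum>i\<in>{1..N}. f i) = (\<Sum>e<N. f (Suc e))"
  by (induction N) (auto simp: sum.cl_ivl_Suc)

lemma G1:
  "(\<Sum>i\<in>{1..Suc N}. X^(D (i,j') (1,j))) = X^(cyc j' j) + X^(ctab j j' + 1) * GA (X^3) N"
proof -
  have "{1..Suc N} = insert 1 {2..Suc N}" by auto
  then have "(\<Sum>i\<in>{1..Suc N}. X^(D (i,j') (1,j))) = X^(D (1,j') (1,j)) + (\<Sum>i\<in>{2..Suc N}. X^(D (i,j') (1,j)))"
    by simp
  also have "(\<Sum>i\<in>{2..Suc N}. X^(D (i,j') (1,j))) = (\<Sum>e<N. X^(D (e+2,j') (1,j)))" by (rule R2)
  also have "\<dots> = (\<Sum>e<N. X^(ctab j j' + 1) * (X^3)^e)"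
    by (rule sum.cong) (auto simp: D.simps power_add[symmetric] power_mult[symmetric] algebra_simps)
  finally show ?thesis by (simp add: D.simps GA_def sum_distrib_left)
qed

lemma G2:
  "(\<Sum>i\<in>{1..Suc N}. X^(D (i,j') (Suc N,j))) = X^(cyc j' j) + X^(ctab j' j + 1) * GA (X^3) N"
proof -
  have "{1..Suc N} = insert (Suc N) {1..N}" by auto
  then have "(\<Sum>i\<in>{1..Suc N}. X^(D (i,j') (Suc N,j))) = X^(D (Suc N,j') (Suc N,j)) + (\<Sum>i\<in>{1..N}. X^(D (i,j') (Suc N,j)))"
    by simp
  also have "(\<Sum>i\<in>{1..N}. X^(D (i,j') (Suc N,j))) = (\<Sum>e<N. X^(D (Suc e,j') (Suc N,j)))" by (rule R1)
  also have "\<dots> = (\<Sum>e<N. X^(ctab j' j + 1) * (X^3)^(N - Suc e))"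
  proof (rule sum.cong[OF refl])
    fix e assume "e \<in> {..<N}"
    then have "D (Suc e,j') (Suc N,j) = ctab j' j + 1 + 3 * (N - Suc e)" by (auto simp: D.simps)
    then show "X^(D (Suc e,j') (Suc N,j)) = X^(ctab j' j + 1) * (X^3)^(N - Suc e)"
      by (simp add: power_add power_mult)
  qed
  also have "\<dots> = X^(ctab j' j + 1) * GA (X^3) N"
    using sum.nat_diff_reindex[of "\<lambda>k. X^(ctab j' j + 1) * (X^3)^k" N]
    by (simp add: GA_def sum_distrib_left)
  finally show ?thesis by (simp add: D.simps)
qed



definition Cs :: "nat \<Rightarrow> (nat \<times> nat) set" where "Cs n = {1..n} \<times> {0,3}"
definition ExV :: "nat \<Rightarrow> (nat \<times> nat) set" where "ExV n = {(1,4),(1,5),(n,1),(n,2)}"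

lemma S_split: "2 \<le> n \<Longrightarrow> S n = Cs n \<union> ExV n"
  unfolding S_def Cs_def ExV_def deg2_def phen_V_def by auto

lemma CE_disj: "2 \<le> n \<Longrightarrow> Cs n \<inter> ExV n = {}"
  unfolding Cs_def ExV_def by auto


lemma OS_split:
  fixes f :: "'b \<Rightarrow> 'b \<Rightarrow> 'a::comm_ring_1"
  assumes fC: "finite C" and fE: "finite E" and dj: "C \<inter> E = {}" and sym: "\<And>u v. f u v = f v u"
  shows "(\<Sum>u\<in>C \<union> E. \<Sum>v\<in>(C \<union> E) - {u}. f u v) =
    (\<Sum>u\<in>C. \<Sum>v\<in>C - {u}. f u v) + 2 * (\<Sum>u\<in>C. \<Sum>v\<in>E. f u v) + (\<Sum>u\<in>E. \<Sum>v\<in>E - {u}. f u v)"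
proof -
  have "(\<Sum>u\<in>C \<union> E. \<Sum>v\<in>(C \<union> E) - {u}. f u v) =
     (\<Sum>u\<in>C. \<Sum>v\<in>(C \<union> E) - {u}. f u v) + (\<Sum>u\<in>E. \<Sum>v\<in>(C \<union> E) - {u}. f u v)"
    by (rule sum.union_disjoint[OF fC fE dj])
  also have "(\<Sum>u\<in>C. \<Sum>v\<in>(C \<union> E) - {u}. f u v) = (\<Sum>u\<in>C. (\<Sum>v\<in>C - {u}. f u v) + (\<Sum>v\<in>E. f u v))"
  proof (rule sum.cong[OF refl])
    fix u assume u: "u \<in> C"
    have "(C \<union> E) - {u} = (C - {u}) \<union> E" using u dj by auto
    moreover have "(C - {u}) \<inter> E = {}" using dj by auto
    ultimately show "(\<Sum>v\<in>(C \<union> E) - {u}. f u v) = (\<Sum>v\<in>C - {u}. f u v) + (\<Sum>v\<in>E. f u v)"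
      using fC fE by (simp add: sum.union_disjoint)
  qed
  also have "(\<Sum>u\<in>E. \<Sum>v\<in>(C \<union> E) - {u}. f u v) = (\<Sum>u\<in>E. (\<Sum>v\<in>C. f u v) + (\<Sum>v\<in>E - {u}. f u v))"
  proof (rule sum.cong[OF refl])
    fix u assume u: "u \<in> E"
    have "(C \<union> E) - {u} = C \<union> (E - {u})" using u dj by auto
    moreover have "C \<inter> (E - {u}) = {}" using dj by auto
    ultimately show "(\<Sum>v\<in>(C \<union> E) - {u}. f u v) = (\<Sum>v\<in>C. f u v) + (\<Sum>v\<in>E - {u}. f u v)"
      using fC fE by (simp add: sum.union_disjoint)
  qed
  finally have eq: "(\<Sum>u\<in>C \<union> E. \<Sum>v\<in>(C \<union> E) - {u}. f u v) =
    ((\<Sum>u\<in>C. \<Sum>v\<in>C - {u}. f u v) + (\<Sum>u\<in>C. \<Sum>v\<in>E. f u v)) +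
    ((\<Sum>u\<in>E. \<Sum>v\<in>C. f u v) + (\<Sum>u\<in>E. \<Sum>v\<in>E - {u}. f u v))"
    by (simp only: sum.distrib)
  have sw: "(\<Sum>u\<in>E. \<Sum>v\<in>C. f u v) = (\<Sum>u\<in>C. \<Sum>v\<in>E. f u v)"
    by (subst sum.swap) (simp only: sym)
  show ?thesis unfolding eq sw by (simp only: mult_2 add_ac)
qed

lemma Off_sum:
  assumes "finite A"
  shows "(\<Sum>p\<in>{(u,v). u \<in> A \<and> v \<in> A \<and> u \<noteq> v}. g p) = (\<Sum>u\<in>A. \<Sum>v\<in>A - {u}. g (u,v))"
proof -
  have "{(u,v). u \<in> A \<and> v \<in> A \<and> u \<noteq> v} = Sigma A (\<lambda>u. A - {u})" by auto
  then show ?thesis using assms by (simp add: sum.Sigma)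
qed


lemma sum4: "(\<Sum>j\<in>{0,3::nat}. \<Sum>j'\<in>{0,3::nat}. (f j j' :: int poly)) = f 0 0 + f 0 3 + f 3 0 + f 3 3"
  by simp

lemma inner4:
  "(\<Sum>j\<in>{0,3::nat}. \<Sum>j'\<in>{0,3::nat}. X^(D (i,j) (i',j'))) =
    (if i = i' then 2 + 2 * X^3 else (2 + 2*X) * (X^3)^(dd i i'))"
proof -
  consider "i = i'" | "i < i'" | "i' < i" by linarith
  then show ?thesis
  proof cases
    case 1
    have d: "D (i,0) (i',0) = 0" "D (i,0) (i',3) = 3" "D (i,3) (i',0) = 3" "D (i,3) (i',3) = 0"
      using 1 by (simp_all add: D.simps cyc_def)
    have "(\<Sum>j\<in>{0,3::nat}. \<Sum>j'\<in>{0,3::nat}. X^(D (i,j) (i',j'))) = X^0 + X^3 + X^3 + X^0"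
      by (simp only: sum4 d)
    also have "\<dots> = 2 + 2 * X^3" by algebra
    finally have c: "(\<Sum>j\<in>{0,3::nat}. \<Sum>j'\<in>{0,3::nat}. X^(D (i,j) (i',j'))) = 2 + 2 * X^3" .
    show ?thesis unfolding if_P[OF 1] by (rule c)
  next
    case 2
    then obtain k where k: "i' = i + Suc k" using less_imp_Suc_add[OF \<open>i < i'\<close>] by auto
    have d: "D (i,0) (i',0) = 3*k+3" "D (i,0) (i',3) = 3*k+4" "D (i,3) (i',0) = 3*k+4" "D (i,3) (i',3) = 3*k+3"
      using k by (simp_all add: D.simps ctab_def)
    have e: "(X^3)^(dd i i') = X^(3*k+3)" using k by (simp add: dd_def power_mult[symmetric] power_add)
    have h4: "X^(3*k+4) = X * X^(3*k+3)"
    proof -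
      have "3*k+4 = Suc (3*k+3)" by simp
      then show ?thesis by (simp only: power_Suc)
    qed
    have "(\<Sum>j\<in>{0,3::nat}. \<Sum>j'\<in>{0,3::nat}. X^(D (i,j) (i',j'))) = X^(3*k+3) + X * X^(3*k+3) + X * X^(3*k+3) + X^(3*k+3)"
      by (simp only: sum4 d h4)
    also have "\<dots> = (2 + 2*X) * X^(3*k+3)" by algebra
    finally have c: "(\<Sum>j\<in>{0,3::nat}. \<Sum>j'\<in>{0,3::nat}. X^(D (i,j) (i',j'))) = (2 + 2*X) * X^(3*k+3)" .
    have ne: "i \<noteq> i'" using 2 by simp
    show ?thesis unfolding if_not_P[OF ne] e by (rule c)
  next
    case 3
    then obtain k where k: "i = i' + Suc k" using less_imp_Suc_add[OF \<open>i' < i\<close>] by auto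
    have d: "D (i,0) (i',0) = 3*k+3" "D (i,0) (i',3) = 3*k+4" "D (i,3) (i',0) = 3*k+4" "D (i,3) (i',3) = 3*k+3"
      using k by (simp_all add: D.simps ctab_def)
    have e: "(X^3)^(dd i i') = X^(3*k+3)" using k by (simp add: dd_def power_mult[symmetric] power_add)
    have h4: "X^(3*k+4) = X * X^(3*k+3)"
    proof -
      have "3*k+4 = Suc (3*k+3)" by simp
      then show ?thesis by (simp only: power_Suc)
    qed
    have "(\<Sum>j\<in>{0,3::nat}. \<Sum>j'\<in>{0,3::nat}. X^(D (i,j) (i',j'))) = X^(3*k+3) + X * X^(3*k+3) + X * X^(3*k+3) + X^(3*k+3)"
      by (simp only: sum4 d h4)
    also have "\<dots> = (2 + 2*X) * X^(3*k+3)" by algebra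
    finally have c: "(\<Sum>j\<in>{0,3::nat}. \<Sum>j'\<in>{0,3::nat}. X^(D (i,j) (i',j'))) = (2 + 2*X) * X^(3*k+3)" .
    have ne: "i \<noteq> i'" using 3 by simp
    show ?thesis unfolding if_not_P[OF ne] e by (rule c)
  qed
qed
lemma D_refl: "D u u = 0"
  by (cases u) (simp add: D.simps cyc_def)

lemma sum_prod_split:
  "(\<Sum>u\<in>A \<times> B. F u) = (\<Sum>i\<in>A. \<Sum>j\<in>B. F (i,j))"
  by (simp add: sum.cartesian_product)

lemma partI:
  "(\<Sum>u\<in>Cs (Suc N). \<Sum>v\<in>Cs (Suc N) - {u}. X^(D u v)) =
     2 * of_nat (Suc N) * X^3 + (2 + 2*X) * (2 * X^3 * (of_nat N * GA (X^3) N - GB (X^3) N))"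
proof -
  let ?I = "{1..Suc N}"
  let ?J = "{0,3::nat}"
  have fC: "finite (Cs (Suc N))" by (simp add: Cs_def)
  have cardC: "card (Cs (Suc N)) = 2 * Suc N" by (simp add: Cs_def card_cartesian_product)
  have "(\<Sum>u\<in>Cs (Suc N). \<Sum>v\<in>Cs (Suc N) - {u}. X^(D u v)) =
      (\<Sum>u\<in>Cs (Suc N). (\<Sum>v\<in>Cs (Suc N). X^(D u v)) - 1)"
    by (rule sum.cong[OF refl]) (simp add: sum_diff1 fC D_refl)
  also have "\<dots> = (\<Sum>u\<in>Cs (Suc N). \<Sum>v\<in>Cs (Suc N). X^(D u v)) - of_nat (2 * Suc N)"
    by (simp add: sum_subtractf cardC)
  also have "(\<Sum>u\<in>Cs (Suc N). \<Sum>v\<in>Cs (Suc N). X^(D u v)) =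
      (\<Sum>i\<in>?I. \<Sum>i'\<in>?I. \<Sum>j\<in>?J. \<Sum>j'\<in>?J. X^(D (i,j) (i',j')))"
    unfolding Cs_def sum_prod_split
    by (rule sum.cong[OF refl], subst sum.swap, rule refl)
  also have "\<dots> = (\<Sum>i\<in>?I. \<Sum>i'\<in>?I. (if i = i' then 2 + 2 * X^3 else 0) +
        (2 + 2*X) * (if i = i' then 0 else (X^3)^(dd i i')))"
    by (simp only: inner4) (rule sum.cong[OF refl], rule sum.cong[OF refl], simp)
  also have "\<dots> = (\<Sum>i\<in>?I. \<Sum>i'\<in>?I. (if i = i' then 2 + 2 * X^3 else 0)) +
        (2 + 2*X) * (\<Sum>i\<in>?I. \<Sum>i'\<in>?I. (if i = i' then 0 else (X^3)^(dd i i')))"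
    by (simp only: sum.distrib sum_distrib_left)
  also have "(\<Sum>i\<in>?I. \<Sum>i'\<in>?I. (if i = i' then 2 + 2 * X^3 else 0)) = of_nat (Suc N) * (2 + 2 * X^3)"
  proof -
    have "(\<Sum>i\<in>?I. \<Sum>i'\<in>?I. (if i = i' then 2 + 2 * X^3 else 0)) = (\<Sum>i\<in>?I. 2 + 2 * X^3)"
      by (rule sum.cong[OF refl]) (simp add: sum.delta)
    then show ?thesis by simp
  qed
  also note Wsum
  finally show ?thesis by (simp add: algebra_simps)
qed


lemma monomc: "monom c k = of_int c * X^k"
  by (simp add: monom_altdef X_def of_int_poly)

lemma col: "(\<Sum>u\<in>Cs (Suc N). X^(D u v)) = (\<Sum>i\<in>{1..Suc N}. X^(D (i,0) v)) + (\<Sum>i\<in>{1..Suc N}. X^(D (i,3) v))"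
  unfolding Cs_def sum_prod_split by (simp add: sum.distrib)

lemma Ex_sum: "1 \<le> N \<Longrightarrow> (\<Sum>v\<in>ExV (Suc N). g v) = g (1,4) + g (1,5) + g (Suc N,1) + g (Suc N, 2)"
  unfolding ExV_def by (simp add: algebra_simps)

lemma partII:
  assumes N: "1 \<le> N"
  shows "(\<Sum>u\<in>Cs (Suc N). \<Sum>v\<in>ExV (Suc N). X^(D u v)) = 4*(X + X^2) + 4*(X^4+X^5)*GA (X^3) N"
proof -
  have "(\<Sum>u\<in>Cs (Suc N). \<Sum>v\<in>ExV (Suc N). X^(D u v)) = (\<Sum>v\<in>ExV (Suc N). \<Sum>u\<in>Cs (Suc N). X^(D u v))"
    by (rule sum.swap)
  also have "\<dots> = (\<Sum>u\<in>Cs (Suc N). X^(D u (1,4))) + (\<Sum>u\<in>Cs (Suc N). X^(D u (1,5)))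
     + (\<Sum>u\<in>Cs (Suc N). X^(D u (Suc N,1))) + (\<Sum>u\<in>Cs (Suc N). X^(D u (Suc N,2)))"
    by (rule Ex_sum[OF N])
  also have "(\<Sum>u\<in>Cs (Suc N). X^(D u (1,4))) = X^2 + X + (X^5 + X^4) * GA (X^3) N"
    unfolding col G1 by (simp add: cyc_def ctab_def algebra_simps)
  also have "(\<Sum>u\<in>Cs (Suc N). X^(D u (1,5))) = X + X^2 + (X^4 + X^5) * GA (X^3) N"
    unfolding col G1 by (simp add: cyc_def ctab_def algebra_simps)
  also have "(\<Sum>u\<in>Cs (Suc N). X^(D u (Suc N,1))) = X + X^2 + (X^4 + X^5) * GA (X^3) N"
    unfolding col G2 by (simp add: cyc_def ctab_def algebra_simps)
  also have "(\<Sum>u\<in>Cs (Suc N). X^(D u (Suc N,2))) = X^2 + X + (X^5 + X^4) * GA (X^3) N"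
    unfolding col G2 by (simp add: cyc_def ctab_def algebra_simps)
  finally show ?thesis by algebra
qed

lemma partIII:
  assumes N: "1 \<le> N"
  shows "(\<Sum>u\<in>ExV (Suc N). \<Sum>v\<in>ExV (Suc N) - {u}. X^(D u v)) = 4*X + 4*X^(3*N+3) + 4*X^(3*N+2)"
proof -
  have fE: "finite (ExV (Suc N))" by (simp add: ExV_def)
  have cE: "card (ExV (Suc N)) = 4" using N by (simp add: ExV_def)
  have "(\<Sum>u\<in>ExV (Suc N). \<Sum>v\<in>ExV (Suc N) - {u}. X^(D u v)) =
      (\<Sum>u\<in>ExV (Suc N). (\<Sum>v\<in>ExV (Suc N). X^(D u v)) - 1)"
    by (rule sum.cong[OF refl]) (simp add: sum_diff1 fE D_refl)
  also have "\<dots> = (\<Sum>u\<in>ExV (Suc N). \<Sum>v\<in>ExV (Suc N). X^(D u v)) - 4"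
    by (simp add: sum_subtractf cE)
  also have "(\<Sum>u\<in>ExV (Suc N). \<Sum>v\<in>ExV (Suc N). X^(D u v)) = 4 + 4*X + 4*X^(3*N+3) + 4*X^(3*N+2)"
  proof -
    have d: "D (1,4) (1,5) = 1" "D (1,5) (1,4) = 1" "D (Suc N,1) (Suc N,2) = 1" "D (Suc N,2) (Suc N,1) = 1"
      "D (1,4) (Suc N,1) = 3*N+3" "D (Suc N,1) (1,4) = 3*N+3"
      "D (1,4) (Suc N,2) = 3*N+2" "D (Suc N,2) (1,4) = 3*N+2"
      "D (1,5) (Suc N,1) = 3*N+2" "D (Suc N,1) (1,5) = 3*N+2"
      "D (1,5) (Suc N,2) = 3*N+3" "D (Suc N,2) (1,5) = 3*N+3"
      using N by (auto simp: D.simps cyc_def ctab_def)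
    show ?thesis
      unfolding Ex_sum[OF N] by (simp only: d D_refl) algebra
  qed
  finally show ?thesis by (simp add: algebra_simps)
qed

lemma hA: "(1 - y) * GA (y::'a::comm_ring_1) N = 1 - y^N"
  by (simp add: GA_def one_diff_power_eq)

lemma hB: "(1 - y)^2 * GB (y::'a::idom) N = y - of_nat N * y^N + (of_nat N - 1) * y * y^N"
proof (induction N)
  case 0
  then show ?case by (simp add: GB_def)
next
  case (Suc N)
  have "(1 - y)^2 * GB y (Suc N) = (1 - y)^2 * GB y N + (1 - y)^2 * (of_nat N * y^N)"
    by (simp add: GB_Suc algebra_simps)
  also have "\<dots> = y - of_nat (Suc N) * y^Suc N + (of_nat (Suc N) - 1) * y * y^Suc N"
    unfolding Suc.IH by (simp add: power2_eq_square algebra_simps)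
  finally show ?case .
qed


lemma p3: "(\<Sum>k\<in>{2..Suc N}. monom (int (Suc N) - int k + 3) (3*k-2)) =
   X^4 * ((of_nat N + 2) * GA (X^3) N - GB (X^3) N)"
proof -
  have "(\<Sum>k\<in>{2..Suc N}. monom (int (Suc N) - int k + 3) (3*k-2)) =
      (\<Sum>e<N. monom (int (Suc N) - int (e+2) + 3) (3*(e+2)-2))" by (rule R2)
  also have "\<dots> = (\<Sum>e<N. (of_nat N + 2) * (X^4 * (X^3)^e) - of_nat e * (X^4 * (X^3)^e))"
  proof (rule sum.cong[OF refl])
    fix e :: nat
    have ex: "3*(e+2)-2 = 4 + 3*e" by simp
    have co: "(of_int (int (Suc N) - int (e+2) + 3) :: int poly) = of_nat N + 2 - of_nat e" by simp
    have pw: "X^(4+3*e) = X^4 * (X^3)^e" by (simp add: power_add power_mult)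
    show "monom (int (Suc N) - int (e+2) + 3) (3*(e+2)-2) = (of_nat N + 2) * (X^4 * (X^3)^e) - of_nat e * (X^4 * (X^3)^e)"
      unfolding monomc ex co pw by (simp add: algebra_simps)
  qed
  also have "\<dots> = X^4 * ((of_nat N + 2) * GA (X^3) N - GB (X^3) N)"
    by (simp add: sum_subtractf sum_distrib_left GA_def GB_def algebra_simps)
  finally show ?thesis .
qed

lemma p4: "(\<Sum>k\<in>{1..N}. monom 1 (3*k-1)) = X^2 * GA (X^3) N"
proof -
  have "(\<Sum>k\<in>{1..N}. monom 1 (3*k-1)) = (\<Sum>e<N. monom 1 (3*Suc e - 1))" by (rule R1)
  also have "\<dots> = (\<Sum>e<N. X^2 * (X^3)^e)"
  proof (rule sum.cong[OF refl])
    fix e :: nat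
    have ex: "3*Suc e - 1 = 2 + 3*e" by simp
    show "monom 1 (3*Suc e - 1) = X^2 * (X^3)^e" unfolding monom1 ex by (simp add: power_add power_mult power2_eq_square)
  qed
  finally show ?thesis by (simp add: GA_def sum_distrib_left)
qed

lemma p6: "(\<Sum>k\<in>{2..Suc N}. monom (int (Suc N) - int k) (3*k)) =
   X^6 * ((of_nat N - 1) * GA (X^3) N - GB (X^3) N)"
proof -
  have "(\<Sum>k\<in>{2..Suc N}. monom (int (Suc N) - int k) (3*k)) =
      (\<Sum>e<N. monom (int (Suc N) - int (e+2)) (3*(e+2)))" by (rule R2)
  also have "\<dots> = (\<Sum>e<N. (of_nat N - 1) * (X^6 * (X^3)^e) - of_nat e * (X^6 * (X^3)^e))"
  proof (rule sum.cong[OF refl])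
    fix e :: nat
    have ex: "3*(e+2) = 6 + 3*e" by simp
    have co: "(of_int (int (Suc N) - int (e+2)) :: int poly) = of_nat N - 1 - of_nat e" by simp
    have pw: "X^(6+3*e) = X^6 * (X^3)^e" by (simp add: power_add power_mult)
    show "monom (int (Suc N) - int (e+2)) (3*(e+2)) = (of_nat N - 1) * (X^6 * (X^3)^e) - of_nat e * (X^6 * (X^3)^e)"
      unfolding monomc ex co pw by (simp add: algebra_simps)
  qed
  also have "\<dots> = X^6 * ((of_nat N - 1) * GA (X^3) N - GB (X^3) N)"
    by (simp add: sum_subtractf sum_distrib_left GA_def GB_def algebra_simps sum.distrib)
  finally show ?thesis .
qed


lemma rhs_conv:
  assumes N: "1 \<le> N"
  shows "monom 6 1 + monom (3 * int (Suc N) - 2) 3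
    + 2 * (\<Sum>k\<in>{2..Suc N}. monom (int (Suc N) - int k + 3) (3 * k - 2))
    + 4 * (\<Sum>k\<in>{1..Suc N-1}. monom 1 (3 * k - 1))
    + monom 6 (3 * Suc N - 1)
    + 2 * (\<Sum>k\<in>{2..Suc N}. monom (int (Suc N) - int k) (3 * k))
    + monom 2 (3 * Suc N)
  = 6*X + (3*of_nat N+1)*X^3 + 2*X^4*((of_nat N+2)*GA (X^3) N - GB (X^3) N) + 4*X^2*GA (X^3) N
    + 6*X^2*(X^3)^N + 2*X^6*((of_nat N - 1)*GA (X^3) N - GB (X^3) N) + 2*X^3*(X^3)^N"
proof -
  have a1: "monom 6 1 = 6 * X" by (simp add: monomc)
  have a2: "monom (3 * int (Suc N) - 2) 3 = (3*of_nat N+1)*X^3" by (simp add: monomc)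
  have a5: "monom 6 (3 * Suc N - 1) = 6*X^2*(X^3)^N"
  proof -
    have "3 * Suc N - 1 = 2 + 3 * N" by simp
    then show ?thesis by (simp add: monomc power_add power_mult power2_eq_square)
  qed
  have a7: "monom 2 (3 * Suc N) = 2*X^3*(X^3)^N"
  proof -
    have "3 * Suc N = 3 + 3 * N" by simp
    then show ?thesis by (simp add: monomc power_add power_mult)
  qed
  show ?thesis unfolding a1 a2 a5 a7 p3 p6 diff_Suc_1 p4 by (simp add: algebra_simps)
qed

lemma one_minus_X3: "1 - X^3 \<noteq> 0"
proof
  assume "1 - X^3 = 0"
  then have "poly (1 - X^3) 0 = 0" by simp
  then show False by (simp add: X_def)
qed

theorem theorem2p1:
  fixes n :: nat
  assumes "n \<ge> 2"
  shows "base_poly (phen_V n) (phen_E n) 2 2 =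
      monom 6 1 + monom (3 * int n - 2) 3
    + 2 * (\<Sum>k\<in>{2..n}. monom (int n - int k + 3) (3 * k - 2))
    + 4 * (\<Sum>k\<in>{1..n-1}. monom 1 (3 * k - 1))
    + monom 6 (3 * n - 1)
    + 2 * (\<Sum>k\<in>{2..n}. monom (int n - int k) (3 * k))
    + monom 2 (3 * n)"
proof -
  define N where "N = n - 1"
  have nN: "n = Suc N" and N: "1 \<le> N" using assms unfolding N_def by arith+
  define A where "A = GA (X^3) N"
  define B where "B = GB (X^3) N"
  define P where "P = (X^3)^N"
  define L where "L = 6*X + 4*X^2 + (of_nat N+1)*X^3 + (2*X^3+2*X^4)*(of_nat N*A - B) + 4*(X^4+X^5)*A + 2*(X^2+X^3)*P"
  define R where "R = 6*X + (3*of_nat N+1)*X^3 + 2*X^4*((of_nat N+2)*A - B) + 4*X^2*A + 6*X^2*P + 2*X^6*((of_nat N-1)*A - B) + 2*X^3*P"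
  have "2 * base_poly (phen_V n) (phen_E n) 2 2 = (\<Sum>u\<in>S n. \<Sum>v\<in>S n - {u}. monom 1 (D u v))"
    using twoH[of n] Off_sum[OF finite_S, of "\<lambda>p. monom 1 (D (fst p) (snd p))" n] by simp
  also have "\<dots> = (\<Sum>u\<in>S n. \<Sum>v\<in>S n - {u}. X^(D u v))" by (simp only: monom1)
  also have "\<dots> = (\<Sum>u\<in>Cs n. \<Sum>v\<in>Cs n - {u}. X^(D u v)) + 2 * (\<Sum>u\<in>Cs n. \<Sum>v\<in>ExV n. X^(D u v))
      + (\<Sum>u\<in>ExV n. \<Sum>v\<in>ExV n - {u}. X^(D u v))"
    unfolding S_split[OF assms]
    by (rule OS_split) (auto simp: Cs_def ExV_def CE_disj[OF assms] D_sym[of _ _])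
  also have "\<dots> = 2 * of_nat (Suc N) * X^3 + (2 + 2*X) * (2 * X^3 * (of_nat N * A - B))
      + 2 * (4*(X + X^2) + 4*(X^4+X^5)*A) + (4*X + 4*X^(3*N+3) + 4*X^(3*N+2))"
    unfolding nN partI partII[OF N] partIII[OF N] A_def B_def by simp
  also have "\<dots> = 2 * L"
  proof -
    have e1: "X^(3*N+3) = X^3 * P" by (simp add: P_def power_add power_mult)
    have e2: "X^(3*N+2) = X^2 * P" by (simp add: P_def power_add power_mult power2_eq_square)
    show ?thesis unfolding e1 e2 L_def of_nat_Suc by algebra
  qed
  finally have H2: "2 * base_poly (phen_V n) (phen_E n) 2 2 = 2 * L" .
  have "(1 - X^3) * L = (1 - X^3) * R"
    unfolding L_def R_def
    by (rule fin_alg[of X A P B "of_nat N"]) (simp_all add: A_def B_def P_def hA hB)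
  then have LR: "L = R" using one_minus_X3 by simp
  have RHS: "monom 6 1 + monom (3 * int n - 2) 3
    + 2 * (\<Sum>k\<in>{2..n}. monom (int n - int k + 3) (3 * k - 2))
    + 4 * (\<Sum>k\<in>{1..n-1}. monom 1 (3 * k - 1))
    + monom 6 (3 * n - 1)
    + 2 * (\<Sum>k\<in>{2..n}. monom (int n - int k) (3 * k))
    + monom 2 (3 * n) = R"
    unfolding nN rhs_conv[OF N] R_def A_def B_def P_def by (rule refl)
  show ?thesis unfolding RHS using H2 LR by simp
qed


end
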